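(* Let $A\in\Theta(n,r)$, $\nu=\mathrm{co}(A)$, and $1\le i\le n-1$. Write $S=S_0(n,r)$. (1) Suppose $\nu_{i+1}\ge1$. Let $s=\min\{x: a_{xi}>0\}$ (with $s=\infty$ if column $i$ is zero) and $t=\min\{x:a_{x,i+1}>0\}$. Then $e_A=ye_{i,\nu}$ for some $y\in S$ if and only if $s\ge t$. (2) Suppose $\nu_i\ge1$. Let $x_0=\max\{x:a_{xi}>0\}$ and $y_0=\max\{x: a_{x,i+1}>0\}$ (with $y_0=-\infty$ if column $i+1$ is zero). Then $e_A=yf_{i,\nu}$ for some $y\in S$ if and only if $x_0\ge y_0$.
   Context: Setup: Fix positive integers $n,r$ and a field $k$. $\Lambda(n,r)$: compositions of $r$ into $n$ nonnegative parts. $\Theta(n,r)$: $n\times n$ nonnegative integer matrices $A=(a_{ij})$ with entry sum $r$, with row/column-sum vectors $\mathrm{ro}(A),\mathrm{co}(A)$. $E_{ij}$ denotes the elementary matrix. The $0$-Schur algebra $S_0(n,r)$ (specialization at $q=0$ of the $q$-Schur algebra, tensored with $k$) has basis $\{e_A:A\in\Theta(n,r)\}$ (orbits of $GL(V)$ on pairs of $n$-step flags in an $r$-dimensional space) with $e_Ae_B=0$ if $\mathrm{co}(A)\ne\mathrm{ro}(B)$, otherwise $e_Ae_B$ is the unique open orbit among pairs $(f,h)$ with $(f,g)\in e_A,(g,h)\in e_B$ for some $g$. For $\nu\in\Lambda(n,r)$: $e_{i,\nu}$ (defined if $\nu_{i+1}\ge1$) is $e_A$ with $\mathrm{co}(A)=\nu$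 whose only nonzero off-diagonal entry is $1$ at $(i,i+1)$; $f_{i,\nu}$ (defined if $\nu_i\ge1$) is $e_A$ with $\mathrm{co}(A)=\nu$ whose only nonzero off-diagonal entry is $1$ at $(i+1,i)$. Right multiplication rules: if $\mathrm{co}(B)_{i+1}>0$ then $e_Bf_{i}=e_{B+E_{p,i}-E_{p,i+1}}$ with $p=\max\{j:b_{j,i+1}>0\}$; if $\mathrm{co}(B)_i>0$ then $e_Be_i=e_{B-E_{p,i}+E_{p,i+1}}$ with $p=\min\{j:b_{ji}>0\}$ (here $e_i,f_i$ are the generators with row vector $\mathrm{co}(B)$). *)

theory Defs
  imports Main "HOL-Library.Extended_Nat"
begin

text \<open>Matrices are functions nat => nat => nat, indices 1..n, zero outside.
Compositions are functions nat => nat supported on 1..n.\<close>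

type_synonym mat = "nat \<Rightarrow> nat \<Rightarrow> nat"

definition Theta :: "nat \<Rightarrow> nat \<Rightarrow> mat set" where
  "Theta n r = {A. (\<forall>i j. A i j \<noteq> 0 \<longrightarrow> i \<in> {1..n} \<and> j \<in> {1..n})
                  \<and> (\<Sum>i\<in>{1..n}. \<Sum>j\<in>{1..n}. A i j) = r}"

definition Lambda :: "nat \<Rightarrow> nat \<Rightarrow> (nat \<Rightarrow> nat) set" where
  "Lambda n r = {\<nu>. (\<forall>i. \<nu> i \<noteq> 0 \<longrightarrow> i \<in> {1..n}) \<and> (\<Sum>i\<in>{1..n}. \<nu> i) = r}"

definition ro :: "nat \<Rightarrow> mat \<Rightarrow> nat \<Rightarrow> nat" where
  "ro n A i = (\<Sum>j\<in>{1..n}. A i j)"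

definition co :: "nat \<Rightarrow> mat \<Rightarrow> nat \<Rightarrow> nat" where
  "co n A j = (\<Sum>i\<in>{1..n}. A i j)"

definition Emat :: "nat \<Rightarrow> nat \<Rightarrow> mat" where
  "Emat p q = (\<lambda>i j. if i = p \<and> j = q then 1 else 0)"

text \<open>Elements of S_0(n,r): k-linear combinations of basis elements e_A, A in Theta(n,r),
represented as coefficient functions supported on Theta(n,r).\<close>

definition Salg :: "nat \<Rightarrow> nat \<Rightarrow> (mat \<Rightarrow> 'k::field) set" where
  "Salg n r = {y. \<forall>B. y B \<noteq> 0 \<longrightarrow> B \<in> Theta n r}"

definition basis_e :: "mat \<Rightarrow> (mat \<Rightarrow> 'k::field)" where
  "basis_e A = (\<lambda>B. if B = A then 1 else 0)"

text \<open>The matrix of e_{i,nu}: column vector nu, only off-diagonal entry 1 at (i,i+1).\<close>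
definition emat_gen :: "nat \<Rightarrow> nat \<Rightarrow> (nat \<Rightarrow> nat) \<Rightarrow> mat" where
  "emat_gen n i \<nu> = (\<lambda>a b.
     if a = b \<and> a \<in> {1..n} then (if a = i + 1 then \<nu> a - 1 else \<nu> a)
     else if a = i \<and> b = i + 1 then 1 else 0)"

text \<open>The matrix of f_{i,nu}: column vector nu, only off-diagonal entry 1 at (i+1,i).\<close>
definition fmat_gen :: "nat \<Rightarrow> nat \<Rightarrow> (nat \<Rightarrow> nat) \<Rightarrow> mat" where
  "fmat_gen n i \<nu> = (\<lambda>a b.
     if a = b \<and> a \<in> {1..n} then (if a = i then \<nu> a - 1 else \<nu> a)
     else if a = i + 1 \<and> b = i then 1 else 0)"

text \<open>Product e_B * e_{i,nu} of basis elements (right multiplication rule).\<close>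
definition mult_basis_e :: "nat \<Rightarrow> mat \<Rightarrow> nat \<Rightarrow> (nat \<Rightarrow> nat) \<Rightarrow> (mat \<Rightarrow> 'k::field)" where
  "mult_basis_e n B i \<nu> =
     (if co n B = ro n (emat_gen n i \<nu>) \<and> co n B i > 0 then
        (let p = Min {j. B j i > 0} in
         basis_e (\<lambda>a b. B a b - Emat p i a b + Emat p (i+1) a b))
      else (\<lambda>_. 0))"

text \<open>Product e_B * f_{i,nu} of basis elements (right multiplication rule).\<close>
definition mult_basis_f :: "nat \<Rightarrow> mat \<Rightarrow> nat \<Rightarrow> (nat \<Rightarrow> nat) \<Rightarrow> (mat \<Rightarrow> 'k::field)" where
  "mult_basis_f n B i \<nu> =
     (if co n B = ro n (fmat_gen n i \<nu>) \<and> co n B (i+1) > 0 then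
        (let p = Max {j. B j (i+1) > 0} in
         basis_e (\<lambda>a b. B a b + Emat p i a b - Emat p (i+1) a b))
      else (\<lambda>_. 0))"

definition rmult_e :: "nat \<Rightarrow> nat \<Rightarrow> (mat \<Rightarrow> 'k::field) \<Rightarrow> nat \<Rightarrow> (nat \<Rightarrow> nat) \<Rightarrow> (mat \<Rightarrow> 'k)" where
  "rmult_e n r y i \<nu> = (\<lambda>C. \<Sum>B\<in>Theta n r. y B * mult_basis_e n B i \<nu> C)"

definition rmult_f :: "nat \<Rightarrow> nat \<Rightarrow> (mat \<Rightarrow> 'k::field) \<Rightarrow> nat \<Rightarrow> (nat \<Rightarrow> nat) \<Rightarrow> (mat \<Rightarrow> 'k)" where
  "rmult_f n r y i \<nu> = (\<lambda>C. \<Sum>B\<in>Theta n r. y B * mult_basis_f n B i \<nu> C)"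

end

theory Submission imports Defs begin

lemma Theta_zero: "A \<in> Theta n r \<Longrightarrow> i \<notin> {1..n} \<or> j \<notin> {1..n} \<Longrightarrow> A i j = 0"
  unfolding Theta_def by blast

lemma entry_le: assumes "A \<in> Theta n r" shows "A i j \<le> r"
proof (cases "i \<in> {1..n} \<and> j \<in> {1..n}")
  case True
  have "A i j \<le> (\<Sum>j\<in>{1..n}. A i j)" using True by (intro member_le_sum) auto
  also have "\<dots> \<le> (\<Sum>i\<in>{1..n}. \<Sum>j\<in>{1..n}. A i j)"
    using True by (intro member_le_sum[where f="\<lambda>i. \<Sum>j\<in>{1..n}. A i j"]) auto
  finally show ?thesis using assms unfolding Theta_def by simp
next
  case False then show ?thesis using Theta_zero[OF assms] by auto
qed

lemma finite_Theta: "finite (Theta n r)"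
proof -
  define F where "F = {g::nat\<Rightarrow>nat. \<forall>j. (j\<in>{1..n} \<longrightarrow> g j \<in> {0..r}) \<and> (j\<notin>{1..n} \<longrightarrow> g j = 0)}"
  have fF: "finite F" unfolding F_def by (rule finite_set_of_finite_funs) auto
  have "finite {A::mat. \<forall>i. (i\<in>{1..n} \<longrightarrow> A i \<in> F) \<and> (i\<notin>{1..n} \<longrightarrow> A i = (\<lambda>_. 0))}"
    by (rule finite_set_of_finite_funs) (auto simp: fF)
  moreover have "Theta n r \<subseteq> {A::mat. \<forall>i. (i\<in>{1..n} \<longrightarrow> A i \<in> F) \<and> (i\<notin>{1..n} \<longrightarrow> A i = (\<lambda>_. 0))}"
    using Theta_zero entry_le unfolding F_def by fastforce
  ultimately show ?thesis by (rule finite_subset[rotated])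
qed

definition shift :: "mat \<Rightarrow> nat \<Rightarrow> nat \<Rightarrow> nat \<Rightarrow> mat" where
  "shift A p q q' = (\<lambda>a b. A a b - Emat p q a b + Emat p q' a b)"

lemma sum_Emat_col: "p \<in> {1..n} \<Longrightarrow> (\<Sum>a\<in>{1..n}. Emat p q a j) = (if j = q then 1 else 0)"
  unfolding Emat_def by (simp add: sum.delta)

lemma sum_Emat_all: assumes "p \<in> {1..n}" "q \<in> {1..n}" shows "(\<Sum>a\<in>{1..n}. \<Sum>b\<in>{1..n}. Emat p q a b) = 1"
proof -
  have "(\<Sum>a\<in>{1..n}. \<Sum>b\<in>{1..n}. Emat p q a b) = (\<Sum>a\<in>{1..n}. if a = p then 1 else 0)"
  proof (intro sum.cong refl)
    fix a show "(\<Sum>b\<in>{1..n}. Emat p q a b) = (if a = p then 1 else 0)"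
      using assms(2) by (cases "a = p") (auto simp: Emat_def)
  qed
  then show ?thesis using assms by simp
qed

lemma shift_pt: "A p q \<ge> 1 \<Longrightarrow> q \<noteq> q' \<Longrightarrow> shift A p q q' a b + Emat p q a b = A a b + Emat p q' a b"
  unfolding shift_def Emat_def by auto

lemma shift_Theta:
  assumes "A \<in> Theta n r" "A p q \<ge> 1" "q \<noteq> q'" "q' \<in> {1..n}"
  shows "shift A p q q' \<in> Theta n r"
proof -
  have pq: "p \<in> {1..n}" "q \<in> {1..n}" using assms(1,2) Theta_zero by (metis not_one_le_zero)+
  have "(\<Sum>a\<in>{1..n}. \<Sum>b\<in>{1..n}. shift A p q q' a b) + 1 = (\<Sum>a\<in>{1..n}. \<Sum>b\<in>{1..n}. shift A p q q' a b + Emat p q a b)"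
    using sum_Emat_all[OF pq] by (simp add: sum.distrib)
  also have "\<dots> = (\<Sum>a\<in>{1..n}. \<Sum>b\<in>{1..n}. A a b + Emat p q' a b)"
    using shift_pt[of A p q q', OF assms(2,3)] by simp
  also have "\<dots> = r + 1" using sum_Emat_all[OF pq(1) assms(4)] assms(1)
    by (simp add: sum.distrib Theta_def)
  finally have s: "(\<Sum>a\<in>{1..n}. \<Sum>b\<in>{1..n}. shift A p q q' a b) = r" by simp
  have "shift A p q q' a b \<noteq> 0 \<Longrightarrow> a \<in> {1..n} \<and> b \<in> {1..n}" for a b
  proof -
    assume h: "shift A p q q' a b \<noteq> 0"
    show ?thesis
    proof (cases "a = p \<and> b = q'")
      case True then show ?thesis using pq assms(4) by auto
    next
      case False
      then have "A a b \<noteq> 0" using h by (auto simp: shift_def Emat_def)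
      then show ?thesis using Theta_zero[OF assms(1), of a b] by argo
    qed
  qed
  then show ?thesis unfolding Theta_def using s by blast
qed

lemma shift_co:
  assumes "A \<in> Theta n r" "A p q \<ge> 1" "q \<noteq> q'"
  shows "co n (shift A p q q') j + (if j = q then 1 else 0) = co n A j + (if j = q' then 1 else 0)"
proof -
  have pq: "p \<in> {1..n}" using assms(1,2) Theta_zero by (metis not_one_le_zero)
  have "co n (shift A p q q') j + (if j = q then 1 else 0) = (\<Sum>a\<in>{1..n}. shift A p q q' a j + Emat p q a j)"
    using sum_Emat_col[OF pq] by (simp add: sum.distrib co_def)
  also have "\<dots> = (\<Sum>a\<in>{1..n}. A a j + Emat p q' a j)"
    using shift_pt[of A p q q', OF assms(2,3)] by simp
  also have "\<dots> = co n A j + (if j = q' then 1 else 0)"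
    using sum_Emat_col[OF pq] by (simp add: sum.distrib co_def)
  finally show ?thesis .
qed

lemma sum_aux1: "(\<Sum>b\<in>{1..n::nat}. (if b = j \<and> j \<in> {1..n} then (X::nat) else 0)) = (if j \<in> {1..n} then X else 0)"
  by (cases "j \<in> {1..n}") auto

lemma sum_aux2: "k \<in> {1..n::nat} \<Longrightarrow> (\<Sum>b\<in>{1..n}. (if P \<and> b = k then (1::nat) else 0)) = (if P then 1 else 0)"
  by (cases P) auto

lemma ro_emat:
  assumes "1 \<le> i" "i + 1 \<le> n"
  shows "ro n (emat_gen n i \<nu>) j = (if j \<in> {1..n} then (if j = i+1 then \<nu> j - 1 else if j = i then \<nu> j + 1 else \<nu> j) else 0)"
proof -
  have "ro n (emat_gen n i \<nu>) j = (\<Sum>b\<in>{1..n::nat}. (if b = j \<and> j \<in> {1..n} then (if j = i + 1 then \<nu> j - 1 else \<nu> j) else 0) + (if j = i \<and> b = i+1 then 1 else 0))"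
    unfolding ro_def emat_gen_def by (intro sum.cong) auto
  also have "\<dots> = (if j \<in> {1..n} then (if j = i + 1 then \<nu> j - 1 else \<nu> j) else 0) + (if j = i then 1 else 0)"
    unfolding sum.distrib sum_aux1 using assms by (subst sum_aux2) auto
  finally show ?thesis using assms by auto
qed

lemma ro_fmat:
  assumes "1 \<le> i" "i + 1 \<le> n"
  shows "ro n (fmat_gen n i \<nu>) j = (if j \<in> {1..n} then (if j = i then \<nu> j - 1 else if j = i+1 then \<nu> j + 1 else \<nu> j) else 0)"
proof -
  have "ro n (fmat_gen n i \<nu>) j = (\<Sum>b\<in>{1..n::nat}. (if b = j \<and> j \<in> {1..n} then (if j = i then \<nu> j - 1 else \<nu> j) else 0) + (if j = i+1 \<and> b = i then 1 else 0))"
    unfolding ro_def fmat_gen_def by (intro sum.cong) auto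
  also have "\<dots> = (if j \<in> {1..n} then (if j = i then \<nu> j - 1 else \<nu> j) else 0) + (if j = i+1 then 1 else 0)"
    unfolding sum.distrib sum_aux1 using assms by (subst sum_aux2) auto
  finally show ?thesis using assms by auto
qed


lemma co_out: "A \<in> Theta n r \<Longrightarrow> j \<notin> {1..n} \<Longrightarrow> co n A j = 0"
  unfolding co_def using Theta_zero by (intro sum.neutral) blast

lemma col_nonempty: assumes "co n A j \<ge> 1" shows "\<exists>x. A x j > 0"
proof (rule ccontr)
  assume "\<not> ?thesis" then have "co n A j = 0" unfolding co_def by simp
  with assms show False by simp
qed

lemma col_finite: "A \<in> Theta n r \<Longrightarrow> finite {x. A x j > 0}"
proof (rule finite_subset[of _ "{1..n}"])
  assume "A \<in> Theta n r"
  then show "{x. 0 < A x j} \<subseteq> {1..n}" using Theta_zero[of A n r] by (metis (mono_tags) mem_Collect_eq not_less_zero subsetI)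
qed simp

lemma basis_Salg: "B \<in> Theta n r \<Longrightarrow> (basis_e B :: mat \<Rightarrow> 'k::field) \<in> Salg n r"
  unfolding Salg_def basis_e_def by auto

lemma rmult_e_basis: assumes "B \<in> Theta n r"
  shows "rmult_e n r (basis_e B :: mat \<Rightarrow> 'k::field) i \<nu> = mult_basis_e n B i \<nu>"
proof
  fix C
  have "rmult_e n r (basis_e B :: mat \<Rightarrow> 'k::field) i \<nu> C = (\<Sum>B'\<in>Theta n r. if B' = B then (mult_basis_e n B' i \<nu> C :: 'k) else 0)"
    unfolding rmult_e_def basis_e_def by (intro sum.cong) auto
  also have "\<dots> = mult_basis_e n B i \<nu> C" using assms finite_Theta by simp
  finally show "rmult_e n r (basis_e B :: mat \<Rightarrow> 'k::field) i \<nu> C = mult_basis_e n B i \<nu> C" .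
qed

lemma rmult_f_basis: assumes "B \<in> Theta n r"
  shows "rmult_f n r (basis_e B :: mat \<Rightarrow> 'k::field) i \<nu> = mult_basis_f n B i \<nu>"
proof
  fix C
  have "rmult_f n r (basis_e B :: mat \<Rightarrow> 'k::field) i \<nu> C = (\<Sum>B'\<in>Theta n r. if B' = B then (mult_basis_f n B' i \<nu> C :: 'k) else 0)"
    unfolding rmult_f_def basis_e_def by (intro sum.cong) auto
  also have "\<dots> = mult_basis_f n B i \<nu> C" using assms finite_Theta by simp
  finally show "rmult_f n r (basis_e B :: mat \<Rightarrow> 'k::field) i \<nu> C = mult_basis_f n B i \<nu> C" .
qed

lemma rmult_e_nz: assumes "rmult_e n r (y :: mat \<Rightarrow> 'k::field) i \<nu> = basis_e A"
  shows "\<exists>B\<in>Theta n r. (mult_basis_e n B i \<nu> A :: 'k) \<noteq> 0"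
proof -
  have "rmult_e n r y i \<nu> A = 1" using assms by (simp add: basis_e_def)
  then have "(\<Sum>B\<in>Theta n r. y B * mult_basis_e n B i \<nu> A) \<noteq> 0" unfolding rmult_e_def by simp
  then obtain B where "B \<in> Theta n r" "y B * mult_basis_e n B i \<nu> A \<noteq> 0"
    by (meson sum.not_neutral_contains_not_neutral)
  then show ?thesis by auto
qed

lemma rmult_f_nz: assumes "rmult_f n r (y :: mat \<Rightarrow> 'k::field) i \<nu> = basis_e A"
  shows "\<exists>B\<in>Theta n r. (mult_basis_f n B i \<nu> A :: 'k) \<noteq> 0"
proof -
  have "rmult_f n r y i \<nu> A = 1" using assms by (simp add: basis_e_def)
  then have "(\<Sum>B\<in>Theta n r. y B * mult_basis_f n B i \<nu> A) \<noteq> 0" unfolding rmult_f_def by simp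
  then obtain B where "B \<in> Theta n r" "y B * mult_basis_f n B i \<nu> A \<noteq> 0"
    by (meson sum.not_neutral_contains_not_neutral)
  then show ?thesis by auto
qed

lemma mult_e_nz: "(mult_basis_e n B i \<nu> A :: 'k::field) \<noteq> 0 \<Longrightarrow> co n B i > 0 \<and>
   A = (\<lambda>a b. B a b - Emat (Min {j. B j i > 0}) i a b + Emat (Min {j. B j i > 0}) (i+1) a b)"
  by (auto simp: mult_basis_e_def basis_e_def Let_def split: if_splits)

lemma mult_f_nz: "(mult_basis_f n B i \<nu> A :: 'k::field) \<noteq> 0 \<Longrightarrow> co n B (i+1) > 0 \<and>
   A = (\<lambda>a b. B a b + Emat (Max {j. B j (i+1) > 0}) i a b - Emat (Max {j. B j (i+1) > 0}) (i+1) a b)"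
  by (auto simp: mult_basis_f_def basis_e_def Let_def split: if_splits)


lemma part1:
  assumes A: "A \<in> Theta n r" and nu: "\<nu> = co n A" and i1: "1 \<le> i" and i2: "i + 1 \<le> n"
    and h: "\<nu> (i+1) \<ge> 1"
  shows "(\<exists>y \<in> (Salg n r :: (mat \<Rightarrow> 'k::field) set). rmult_e n r y i \<nu> = basis_e A)
       \<longleftrightarrow>
       (let s = (if {x. A x i > 0} = {} then \<infinity> else enat (Min {x. A x i > 0}));
            t = Min {x. A x (i+1) > 0}
        in s \<ge> enat t)"
proof -
  define T where "T = {x. A x (i+1) > 0}"
  define S where "S = {x. A x i > 0}"
  have Tne: "T \<noteq> {}" using col_nonempty[of n A "i+1"] h nu unfolding T_def by auto
  have Tfin: "finite T" "finite S" unfolding T_def S_def using col_finite[OF A] by auto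
  define t where "t = Min T"
  have tT: "t \<in> T" using Tne Tfin unfolding t_def by simp
  have tle: "\<And>x. x \<in> T \<Longrightarrow> t \<le> x" using Tfin unfolding t_def by simp
  have At: "A t (i+1) \<ge> 1" using tT unfolding T_def by simp
  have "(\<exists>y \<in> (Salg n r :: (mat \<Rightarrow> 'k::field) set). rmult_e n r y i \<nu> = basis_e A)
        \<longleftrightarrow> (if S = {} then \<infinity> else enat (Min S)) \<ge> enat t"
  proof
    assume "\<exists>y \<in> (Salg n r :: (mat \<Rightarrow> 'k::field) set). rmult_e n r y i \<nu> = basis_e A"
    then obtain y :: "mat \<Rightarrow> 'k" where "rmult_e n r y i \<nu> = basis_e A" by blast
    from rmult_e_nz[OF this] obtain B where B: "B \<in> Theta n r" "(mult_basis_e n B i \<nu> A :: 'k) \<noteq> 0" by blast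
    define p where "p = Min {j. B j i > 0}"
    from mult_e_nz[OF B(2)] have cB: "co n B i > 0" and Aeq: "A = (\<lambda>a b. B a b - Emat p i a b + Emat p (i+1) a b)"
      unfolding p_def by auto
    have ne: "{j. B j i > 0} \<noteq> {}" using col_nonempty[of n B i] cB by auto
    have pB: "B p i > 0" using ne col_finite[OF B(1), of i] unfolding p_def using Min_in by blast
    have below: "\<And>x. x < p \<Longrightarrow> B x i = 0" using col_finite[OF B(1), of i] unfolding p_def
      by (metis (mono_tags) Min_le mem_Collect_eq not_gr0 not_le)
    have Ap: "A p (i+1) \<ge> 1" using Aeq by (simp add: Emat_def)
    then have "t \<le> p" using tle unfolding T_def by simp
    moreover have "\<And>x. x \<in> S \<Longrightarrow> p \<le> x"
    proof -
      fix x assume "x \<in> S"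
      then have "A x i > 0" unfolding S_def by simp
      show "p \<le> x"
      proof (rule ccontr)
        assume "\<not> p \<le> x" then have "x < p" by simp
        then have "A x i = 0" using below[of x] Aeq by (simp add: Emat_def)
        with \<open>A x i > 0\<close> show False by simp
      qed
    qed
    ultimately show "(if S = {} then \<infinity> else enat (Min S)) \<ge> enat t"
      using Tfin(2) by (auto simp: Min_ge_iff intro: order_trans)
  next
    assume st: "(if S = {} then \<infinity> else enat (Min S)) \<ge> enat t"
    have below: "\<And>x. x < t \<Longrightarrow> A x i = 0"
    proof (rule ccontr)
      fix x assume "x < t" "A x i \<noteq> 0"
      then have "x \<in> S" unfolding S_def by simp
      then have "Min S \<le> x" using Tfin(2) by simp
      then show False using st \<open>x < t\<close> \<open>x \<in> S\<close> by (auto split: if_splits)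
    qed
    have tn: "t \<in> {1..n}" using At Theta_zero[OF A] by (metis not_one_le_zero)
    define B where "B = shift A t (i+1) i"
    have BT: "B \<in> Theta n r" unfolding B_def using shift_Theta[OF A At] i1 i2 by simp
    have coB: "co n B j + (if j = i+1 then 1 else 0) = \<nu> j + (if j = i then 1 else 0)" for j
      unfolding B_def nu using shift_co[OF A At, of i] by simp
    have co_eq: "co n B = ro n (emat_gen n i \<nu>)"
    proof
      fix j
      show "co n B j = ro n (emat_gen n i \<nu>) j"
      proof (cases "j \<in> {1..n}")
        case True then show ?thesis using coB[of j] ro_emat[OF i1 i2, of \<nu> j] by (auto split: if_splits)
      next
        case False
        then have "j \<noteq> i" "j \<noteq> i+1" using i1 i2 by auto
        then show ?thesis using coB[of j] ro_emat[OF i1 i2, of \<nu> j] False co_out[OF A False] nu by auto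
      qed
    qed
    have cBi: "co n B i > 0" using coB[of i] by simp
    have Bt: "B t i > 0" unfolding B_def shift_def Emat_def by simp
    have Bbelow: "\<And>x. x < t \<Longrightarrow> B x i = 0" unfolding B_def shift_def Emat_def using below by simp
    have pmin: "Min {j. B j i > 0} = t"
    proof (rule Min_eqI)
      show "finite {j. B j i > 0}" using col_finite[OF BT] .
      show "t \<in> {j. B j i > 0}" using Bt by simp
      fix x assume "x \<in> {j. B j i > 0}" then show "t \<le> x" using Bbelow by (metis mem_Collect_eq not_le less_irrefl)
    qed
    have res: "(\<lambda>a b. B a b - Emat t i a b + Emat t (i+1) a b) = A"
      using At unfolding B_def shift_def Emat_def by (intro ext) auto
    have "mult_basis_e n B i \<nu> = (basis_e A :: mat \<Rightarrow> 'k)"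
      unfolding mult_basis_e_def using co_eq cBi pmin res by (simp add: Let_def)
    then have "rmult_e n r (basis_e B :: mat \<Rightarrow> 'k) i \<nu> = basis_e A" by (subst rmult_e_basis[OF BT])
    then show "\<exists>y \<in> (Salg n r :: (mat \<Rightarrow> 'k::field) set). rmult_e n r y i \<nu> = basis_e A"
      using basis_Salg[OF BT] by blast
  qed
  then show ?thesis unfolding S_def T_def t_def Let_def by simp
qed


lemma part2:
  assumes A: "A \<in> Theta n r" and nu: "\<nu> = co n A" and i1: "1 \<le> i" and i2: "i + 1 \<le> n"
    and h: "\<nu> i \<ge> 1"
  shows "(\<exists>y \<in> (Salg n r :: (mat \<Rightarrow> 'k::field) set). rmult_f n r y i \<nu> = basis_e A)
       \<longleftrightarrow>
       (let x0 = Max {x. A x i > 0}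
        in {x. A x (i+1) > 0} = {} \<or> x0 \<ge> Max {x. A x (i+1) > 0})"
proof -
  define T where "T = {x. A x (i+1) > 0}"
  define S where "S = {x. A x i > 0}"
  have Sne: "S \<noteq> {}" using col_nonempty[of n A i] h nu unfolding S_def by auto
  have Tfin: "finite T" "finite S" unfolding T_def S_def using col_finite[OF A] by auto
  define x0 where "x0 = Max S"
  have xS: "x0 \<in> S" using Sne Tfin unfolding x0_def by simp
  have Ax0: "A x0 i \<ge> 1" using xS unfolding S_def by simp
  have "(\<exists>y \<in> (Salg n r :: (mat \<Rightarrow> 'k::field) set). rmult_f n r y i \<nu> = basis_e A)
        \<longleftrightarrow> (T = {} \<or> x0 \<ge> Max T)"
  proof
    assume "\<exists>y \<in> (Salg n r :: (mat \<Rightarrow> 'k::field) set). rmult_f n r y i \<nu> = basis_e A"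
    then obtain y :: "mat \<Rightarrow> 'k" where "rmult_f n r y i \<nu> = basis_e A" by blast
    from rmult_f_nz[OF this] obtain B where B: "B \<in> Theta n r" "(mult_basis_f n B i \<nu> A :: 'k) \<noteq> 0" by blast
    define p where "p = Max {j. B j (i+1) > 0}"
    from mult_f_nz[OF B(2)] have cB: "co n B (i+1) > 0" and Aeq: "A = (\<lambda>a b. B a b + Emat p i a b - Emat p (i+1) a b)"
      unfolding p_def by auto
    have above: "\<And>x. p < x \<Longrightarrow> B x (i+1) = 0" using col_finite[OF B(1), of "i+1"] unfolding p_def
      by (metis (mono_tags) Max_ge mem_Collect_eq not_gr0 not_le)
    have Ap: "A p i \<ge> 1" using Aeq by (simp add: Emat_def)
    then have "p \<le> x0" using Tfin(2) unfolding x0_def S_def by simp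
    moreover have "\<And>x. x \<in> T \<Longrightarrow> x \<le> p"
    proof -
      fix x assume "x \<in> T"
      then have "A x (i+1) > 0" unfolding T_def by simp
      show "x \<le> p"
      proof (rule ccontr)
        assume "\<not> x \<le> p" then have "p < x" by simp
        then have "A x (i+1) = 0" using above[of x] Aeq by (simp add: Emat_def)
        with \<open>A x (i+1) > 0\<close> show False by simp
      qed
    qed
    ultimately show "T = {} \<or> x0 \<ge> Max T"
    proof -
      assume px: "p \<le> x0" and Tp: "\<And>x. x \<in> T \<Longrightarrow> x \<le> p"
      show ?thesis
      proof (cases "T = {}")
        case False
        then have "Max T \<in> T" using Tfin(1) by simp
        then show ?thesis using Tp px by fastforce
      qed simp
    qed
  next
    assume st: "T = {} \<or> x0 \<ge> Max T"
    have above: "\<And>x. x0 < x \<Longrightarrow> A x (i+1) = 0"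
    proof (rule ccontr)
      fix x assume "x0 < x" "A x (i+1) \<noteq> 0"
      then have "x \<in> T" unfolding T_def by simp
      then have "x \<le> Max T" using Tfin(1) by simp
      then show False using st \<open>x0 < x\<close> \<open>x \<in> T\<close> by auto
    qed
    define B where "B = shift A x0 i (i+1)"
    have BT: "B \<in> Theta n r" unfolding B_def using shift_Theta[OF A Ax0] i1 i2 by simp
    have coB: "co n B j + (if j = i then 1 else 0) = \<nu> j + (if j = i+1 then 1 else 0)" for j
      unfolding B_def nu using shift_co[OF A Ax0, of "i+1"] by simp
    have co_eq: "co n B = ro n (fmat_gen n i \<nu>)"
    proof
      fix j
      show "co n B j = ro n (fmat_gen n i \<nu>) j"
      proof (cases "j \<in> {1..n}")
        case True then show ?thesis using coB[of j] ro_fmat[OF i1 i2, of \<nu> j] by (auto split: if_splits)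
      next
        case False
        then have "j \<noteq> i" "j \<noteq> i+1" using i1 i2 by auto
        then show ?thesis using coB[of j] ro_fmat[OF i1 i2, of \<nu> j] False co_out[OF A False] nu by auto
      qed
    qed
    have cBi: "co n B (i+1) > 0" using coB[of "i+1"] by simp
    have Bt: "B x0 (i+1) > 0" unfolding B_def shift_def Emat_def by simp
    have Babove: "\<And>x. x0 < x \<Longrightarrow> B x (i+1) = 0" unfolding B_def shift_def Emat_def using above by simp
    have pmax: "Max {j. B j (i+1) > 0} = x0"
    proof (rule Max_eqI)
      show "finite {j. B j (i+1) > 0}" using col_finite[OF BT] .
      show "x0 \<in> {j. B j (i+1) > 0}" using Bt by simp
      fix x assume "x \<in> {j. B j (i+1) > 0}" then show "x \<le> x0" using Babove by (metis mem_Collect_eq not_le less_irrefl)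
    qed
    have res: "(\<lambda>a b. B a b + Emat x0 i a b - Emat x0 (i+1) a b) = A"
      using Ax0 unfolding B_def shift_def Emat_def by (intro ext) auto
    have "mult_basis_f n B i \<nu> = (basis_e A :: mat \<Rightarrow> 'k)"
      unfolding mult_basis_f_def using co_eq cBi pmax res by (simp add: Let_def)
    then have "rmult_f n r (basis_e B :: mat \<Rightarrow> 'k) i \<nu> = basis_e A" by (subst rmult_f_basis[OF BT])
    then show "\<exists>y \<in> (Salg n r :: (mat \<Rightarrow> 'k::field) set). rmult_f n r y i \<nu> = basis_e A"
      using basis_Salg[OF BT] by blast
  qed
  then show ?thesis unfolding S_def T_def x0_def Let_def by simp
qed

theorem mainTheorem13:
  fixes n r i :: nat and A :: mat and \<nu> :: "nat \<Rightarrow> nat"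
  assumes "A \<in> Theta n r" and "\<nu> = co n A" and "1 \<le> i" and "i \<le> n - 1"
  shows
   "(\<nu> (i+1) \<ge> 1 \<longrightarrow>
      ((\<exists>y \<in> (Salg n r :: (mat \<Rightarrow> 'k::field) set). rmult_e n r y i \<nu> = basis_e A)
       \<longleftrightarrow>
       (let s = (if {x. A x i > 0} = {} then \<infinity> else enat (Min {x. A x i > 0}));
            t = Min {x. A x (i+1) > 0}
        in s \<ge> enat t)))
    \<and>
    (\<nu> i \<ge> 1 \<longrightarrow>
      ((\<exists>y \<in> (Salg n r :: (mat \<Rightarrow> 'k::field) set). rmult_f n r y i \<nu> = basis_e A)
       \<longleftrightarrow>
       (let x0 = Max {x. A x i > 0}
        in {x. A x (i+1) > 0} = {} \<or> x0 \<ge> Max {x. A x (i+1) > 0})))"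
proof -
  have i2: "i + 1 \<le> n" using assms(3,4) by simp
  show ?thesis using part1[OF assms(1,2,3) i2] part2[OF assms(1,2,3) i2] by blast
qed

end
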